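(* There is a deterministic distributed dynamic data structure for $2$-hop neighborhood listing which handles edge insertions and deletions in $O\left(\frac{n}{\log n}\right)$ amortized rounds.
   Context: Highly dynamic network model: a synchronous network on a fixed set $V$ of $n$ nodes with unique identifiers starts as the empty graph; at the beginning of round $i$ the graph is $G_i=(V,E_i)$, obtained from the previous graph by an adversary inserting and/or deleting an arbitrary (unbounded) set of edges. At the start of each round every node is notified only of the insertions/deletions of edges incident to it; then each node may send a message of $O(\log n)$ bits to each of its current neighbors. A distributed dynamic data structure consists of a local part $DS_v$ at each node $v$; at the end of every round, $DS_v$ may be queried and must answer immediately, without any further communication, either correctly or with $\texttt{inconsistent}$. The amortized round complexity is at most $c$ if for every round $i$, the number of rounds up to round $i$ in which at least one node $v$ has $DS_v$ in an inconsistent state, divided by the total number of topology changes that occurred up to round $i$, is at most $c$. Let $E^{v,2}_i$ be the set of edges of $G_i$ incident to $v$ or to a neighbor of $v$. $2$-hop neighborhood listing: $DS_v$ must respond at the end of round $i$ to a query $\{u,w\}$ with $\texttt{true}$ if $\{u,w\}\in E^{v,2}_i$, $\texttt{false}$ otherwise, or $\texttt{inconsistent}$. *)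

theory Defs
  imports Complex_Main
begin

text \<open>A deterministic distributed dynamic data structure for a fixed n,
  with local states of type 's.  All functions take the node identifier v
  as first argument (a node knows its own identifier and n).
  \<^item> init v: initial local state of v (the graph starts empty);
  \<^item> send v s ins del u: the message (a natural number, or None for no
    message) that v, in local state s (state at the end of the previous
    round), after being notified that the incident edges to the nodes in
    ins were inserted and those to nodes in del were deleted, sends to its
    current neighbour u;
  \<^item> step v s ins del rcv: the new local state of v, where rcv u is the
    message received from u (None if u is not a current neighbour or sent
    nothing);
  \<^item> consistent v s / answer v s u w: the local query interface of DS_v:
    if not consistent, every query is answered inconsistent; otherwise the
    query {u,w} is answered answer v s u w.\<close>
record 's dds =
  init :: "nat \<Rightarrow> 's"
  send :: "nat \<Rightarrow> 's \<Rightarrow> nat set \<Rightarrow> nat set \<Rightarrow> nat \<Rightarrow> nat option"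
  step :: "nat \<Rightarrow> 's \<Rightarrow> nat set \<Rightarrow> nat set \<Rightarrow> (nat \<Rightarrow> nat option) \<Rightarrow> 's"
  consistent :: "nat \<Rightarrow> 's \<Rightarrow> bool"
  answer :: "nat \<Rightarrow> 's \<Rightarrow> nat \<Rightarrow> nat \<Rightarrow> bool"

definition valid_seq :: "nat \<Rightarrow> (nat \<Rightarrow> nat set set) \<Rightarrow> bool" where
  "valid_seq n E \<longleftrightarrow> E 0 = {} \<and>
     (\<forall>i. E i \<subseteq> {{u, w} | u w. u < n \<and> w < n \<and> u \<noteq> w})"

definition ins_nbrs :: "(nat \<Rightarrow> nat set set) \<Rightarrow> nat \<Rightarrow> nat \<Rightarrow> nat set" where
  "ins_nbrs E i v = {u. {v, u} \<in> E i \<and> {v, u} \<notin> E (i - 1)}"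

definition del_nbrs :: "(nat \<Rightarrow> nat set set) \<Rightarrow> nat \<Rightarrow> nat \<Rightarrow> nat set" where
  "del_nbrs E i v = {u. {v, u} \<notin> E i \<and> {v, u} \<in> E (i - 1)}"

fun run :: "'s dds \<Rightarrow> (nat \<Rightarrow> nat set set) \<Rightarrow> nat \<Rightarrow> nat \<Rightarrow> 's" where
  "run A E 0 v = init A v"
| "run A E (Suc i) v =
     step A v (run A E i v) (ins_nbrs E (Suc i) v) (del_nbrs E (Suc i) v)
       (\<lambda>u. if {u, v} \<in> E (Suc i)
             then send A u (run A E i u) (ins_nbrs E (Suc i) u) (del_nbrs E (Suc i) u) v
             else None)"

definition two_hop :: "(nat \<Rightarrow> nat set set) \<Rightarrow> nat \<Rightarrow> nat \<Rightarrow> nat set set" where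
  "two_hop E i v = {e \<in> E i. \<exists>x \<in> e. x = v \<or> {v, x} \<in> E i}"

text \<open>Messages have O(log n) bits: values below (n+1)^K, i.e. at most
  about K log(n+1) bits.\<close>
definition msg_bounded :: "nat \<Rightarrow> nat \<Rightarrow> 's dds \<Rightarrow> bool" where
  "msg_bounded n K A \<longleftrightarrow>
     (\<forall>v s ins del u m. send A v s ins del u = Some m \<longrightarrow> m < (n + 1) ^ K)"

definition correct_2hop :: "nat \<Rightarrow> 's dds \<Rightarrow> bool" where
  "correct_2hop n A \<longleftrightarrow>
     (\<forall>E. valid_seq n E \<longrightarrow> (\<forall>i v. v < n \<longrightarrow> consistent A v (run A E i v) \<longrightarrow>
        (\<forall>u w. answer A v (run A E i v) u w \<longleftrightarrow> {u, w} \<in> two_hop E i v)))"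

definition changes :: "(nat \<Rightarrow> nat set set) \<Rightarrow> nat \<Rightarrow> nat" where
  "changes E j = card ((E (j - 1) - E j) \<union> (E j - E (j - 1)))"

definition total_changes :: "(nat \<Rightarrow> nat set set) \<Rightarrow> nat \<Rightarrow> nat" where
  "total_changes E i = (\<Sum>j\<in>{1..i}. changes E j)"

definition inconsistent_rounds :: "nat \<Rightarrow> 's dds \<Rightarrow> (nat \<Rightarrow> nat set set) \<Rightarrow> nat \<Rightarrow> nat" where
  "inconsistent_rounds n A E i =
     card {j \<in> {1..i}. \<exists>v < n. \<not> consistent A v (run A E j v)}"

text \<open>Amortized round complexity at most c (ratio written multiplicatively,
  so that with zero changes no inconsistent round is allowed).\<close>
definition amortized_le :: "nat \<Rightarrow> 's dds \<Rightarrow> real \<Rightarrow> bool" where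
  "amortized_le n A c \<longleftrightarrow>
     (\<forall>E. valid_seq n E \<longrightarrow>
        (\<forall>i. real (inconsistent_rounds n A E i) \<le> c * real (total_changes E i)))"

end

theory Submission
  imports Defs "HOL-Library.Discrete_Functions" "HOL-Library.Nat_Bijection" "HOL-Library.Countable"
begin

type_synonym st = "nat \<times> nat \<times> (nat \<times> nat) list"

definition bb :: "nat \<Rightarrow> nat" where "bb n = floor_log n"
definition TT :: "nat \<Rightarrow> nat" where "TT n = n div bb n + 1"

definition NB :: "st \<Rightarrow> nat set" where "NB s = set_decode (fst s)"
definition PH :: "st \<Rightarrow> nat" where "PH s = fst (snd s)"
definition CNT :: "st \<Rightarrow> nat \<Rightarrow> nat" where "CNT s u = fst (snd (snd s) ! u)"
definition BUF :: "st \<Rightarrow> nat \<Rightarrow> nat set" where "BUF s u = set_decode (snd (snd (snd s) ! u))"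

definition mk :: "nat \<Rightarrow> nat set \<Rightarrow> nat \<Rightarrow> (nat \<Rightarrow> nat) \<Rightarrow> (nat \<Rightarrow> nat set) \<Rightarrow> st" where
  "mk n nb ph cnt buf = (set_encode nb, ph, map (\<lambda>u. (cnt u, set_encode (buf u))) [0..<n])"

lemma NB_mk: "finite nb \<Longrightarrow> NB (mk n nb ph cnt buf) = nb"
  by (simp add: NB_def mk_def)
lemma PH_mk: "PH (mk n nb ph cnt buf) = ph"
  by (simp add: PH_def mk_def)
lemma CNT_mk: "u < n \<Longrightarrow> CNT (mk n nb ph cnt buf) u = cnt u"
  by (simp add: CNT_def mk_def)
lemma BUF_mk: "u < n \<Longrightarrow> finite (buf u) \<Longrightarrow> BUF (mk n nb ph cnt buf) u = buf u"
  by (simp add: BUF_def mk_def)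
lemma finite_BUF: "finite (BUF s u)" by (simp add: BUF_def)

definition chunk_enc :: "nat \<Rightarrow> nat \<Rightarrow> nat set \<Rightarrow> nat" where
  "chunk_enc b k S = set_encode ((\<lambda>x. x - k*b) ` (S \<inter> {k*b..<Suc k*b}))"
definition chunk_dec :: "nat \<Rightarrow> nat \<Rightarrow> nat \<Rightarrow> nat set" where
  "chunk_dec b k d = (\<lambda>i. i + k*b) ` set_decode d"

lemma set_encode_less: "A \<subseteq> {..<b} \<Longrightarrow> set_encode A < 2 ^ b"
proof (induction b arbitrary: A)
  case 0
  then show ?case by simp
next
  case (Suc b)
  have f: "finite (A - {b})" using Suc.prems finite_subset by blast
  have s: "A - {b} \<subseteq> {..<b}" using Suc.prems by auto
  have lt: "set_encode (A - {b}) < 2 ^ b" using Suc.IH[OF s] .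
  show ?case
  proof (cases "b \<in> A")
    case True
    then have "A = insert b (A - {b})" by auto
    then have "set_encode A = 2^b + set_encode (A - {b})"
      using f by (metis Diff_iff insertI1 set_encode_insert)
    then show ?thesis using lt by simp
  next
    case False
    then have "A = A - {b}" by auto
    then show ?thesis using lt by (metis less_trans one_less_numeral_iff power_strict_increasing_iff semiring_norm(76) lessI)
  qed
qed

lemma chunk_enc_less: "chunk_enc b k S < 2 ^ b"
  unfolding chunk_enc_def
  by (rule set_encode_less) auto

lemma chunk_dec_enc: "chunk_dec b k (chunk_enc b k S) = S \<inter> {k*b..<Suc k*b}"
proof -
  have "finite ((\<lambda>x. x - k*b) ` (S \<inter> {k*b..<Suc k*b}))" by simp
  then have "chunk_dec b k (chunk_enc b k S) = (\<lambda>i. i + k*b) ` ((\<lambda>x. x - k*b) ` (S \<inter> {k*b..<Suc k*b}))"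
    by (simp add: chunk_dec_def chunk_enc_def)
  also have "\<dots> = S \<inter> {k*b..<Suc k*b}"
    by (auto simp: image_image image_iff)
  finally show ?thesis .
qed


definition newnb :: "nat \<Rightarrow> st \<Rightarrow> nat set \<Rightarrow> nat set \<Rightarrow> nat set" where
  "newnb n s ins del = ((NB s \<union> ins) - del) \<inter> {..<n}"
definition newph :: "st \<Rightarrow> nat set \<Rightarrow> nat set \<Rightarrow> nat" where
  "newph s ins del = (if ins = {} \<and> del = {} then Suc (PH s) else 0)"
definition msg :: "nat \<Rightarrow> st \<Rightarrow> nat set \<Rightarrow> nat set \<Rightarrow> nat option" where
  "msg n s ins del = (if newph s ins del < TT n
     then Some (newph s ins del * 2 ^ bb n + chunk_enc (bb n) (newph s ins del) (newnb n s ins del))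
     else None)"
definition newcnt :: "nat \<Rightarrow> (nat \<Rightarrow> nat option) \<Rightarrow> st \<Rightarrow> nat \<Rightarrow> nat" where
  "newcnt b rcv s u = (case rcv u of None \<Rightarrow> CNT s u | Some m \<Rightarrow> Suc (m div 2 ^ b))"
definition newbuf :: "nat \<Rightarrow> (nat \<Rightarrow> nat option) \<Rightarrow> st \<Rightarrow> nat \<Rightarrow> nat set" where
  "newbuf b rcv s u = (case rcv u of None \<Rightarrow> BUF s u
     | Some m \<Rightarrow> (if m div 2 ^ b = 0 then {} else BUF s u) \<union> chunk_dec b (m div 2 ^ b) (m mod 2 ^ b))"

lemma finite_newbuf: "finite (newbuf b rcv s u)"
  by (auto simp: newbuf_def finite_BUF chunk_dec_def split: option.splits)

definition Alg :: "nat \<Rightarrow> st dds" where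
  "Alg n = \<lparr> init = (\<lambda>v. mk n {} (TT n) (\<lambda>_. 0) (\<lambda>_. {})),
            send = (\<lambda>v s ins del u. msg n s ins del),
            step = (\<lambda>v s ins del rcv. mk n (newnb n s ins del) (newph s ins del)
                       (newcnt (bb n) rcv s) (newbuf (bb n) rcv s)),
            consistent = (\<lambda>v s. \<forall>u\<in>NB s. TT n \<le> CNT s u),
            answer = (\<lambda>v s x y. (x = v \<and> y \<in> NB s) \<or> (y = v \<and> x \<in> NB s)
                  \<or> (x \<in> NB s \<and> y \<in> BUF s x) \<or> (y \<in> NB s \<and> x \<in> BUF s y)) \<rparr>"

definition AlgN :: "nat \<Rightarrow> nat dds" where
  "AlgN n = \<lparr> init = (\<lambda>v. to_nat (init (Alg n) v)),
            send = (\<lambda>v s. send (Alg n) v (from_nat s)),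
            step = (\<lambda>v s ins del rcv. to_nat (step (Alg n) v (from_nat s) ins del rcv)),
            consistent = (\<lambda>v s. consistent (Alg n) v (from_nat s)),
            answer = (\<lambda>v s. answer (Alg n) v (from_nat s)) \<rparr>"

lemma AlgN_sel:
  "init (AlgN n) v = to_nat (init (Alg n) v)"
  "send (AlgN n) v s ins del u = send (Alg n) v (from_nat s) ins del u"
  "step (AlgN n) v s ins del rcv = to_nat (step (Alg n) v (from_nat s) ins del rcv)"
  "consistent (AlgN n) v s = consistent (Alg n) v (from_nat s)"
  "answer (AlgN n) v s x y = answer (Alg n) v (from_nat s) x y"
  by (simp_all add: AlgN_def)

lemma Alg_sel:
  "init (Alg n) v = mk n {} (TT n) (\<lambda>_. 0) (\<lambda>_. {})"
  "send (Alg n) v s ins del u = msg n s ins del"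
  "step (Alg n) v s ins del rcv = mk n (newnb n s ins del) (newph s ins del)
                       (newcnt (bb n) rcv s) (newbuf (bb n) rcv s)"
  "consistent (Alg n) v s = (\<forall>u\<in>NB s. TT n \<le> CNT s u)"
  "answer (Alg n) v s x y = ((x = v \<and> y \<in> NB s) \<or> (y = v \<and> x \<in> NB s)
                  \<or> (x \<in> NB s \<and> y \<in> BUF s x) \<or> (y \<in> NB s \<and> x \<in> BUF s y))"
  by (simp_all add: Alg_def)

lemma run_AlgN: "run (AlgN n) E i v = to_nat (run (Alg n) E i v)"
proof (induction i arbitrary: v)
  case 0
  then show ?case by (simp add: AlgN_sel)
next
  case (Suc i)
  have e: "(\<lambda>u. if {u, v} \<in> E (Suc i) then send (AlgN n) u (run (AlgN n) E i u)
                       (ins_nbrs E (Suc i) u) (del_nbrs E (Suc i) u) v else None)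
        = (\<lambda>u. if {u, v} \<in> E (Suc i) then send (Alg n) u (run (Alg n) E i u)
                       (ins_nbrs E (Suc i) u) (del_nbrs E (Suc i) u) v else None)"
    by (rule ext) (simp add: Suc.IH AlgN_sel(2))
  show ?case by (simp only: run.simps e Suc.IH AlgN_sel from_nat_to_nat)
qed

definition Nbr :: "(nat \<Rightarrow> nat set set) \<Rightarrow> nat \<Rightarrow> nat \<Rightarrow> nat set" where
  "Nbr E j v = {u. {v, u} \<in> E j}"

lemma valid_edge:
  assumes "valid_seq n E" "{u, v} \<in> E j"
  shows "u < n \<and> v < n \<and> u \<noteq> v"
proof -
  have "{u, v} \<in> {{u, w} | u w. u < n \<and> w < n \<and> u \<noteq> w}" using assms unfolding valid_seq_def by blast
  then obtain a c where "{u,v} = {a,c}" "a < n" "c < n" "a \<noteq> c" by blast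
  then show ?thesis by (metis doubleton_eq_iff)
qed

lemma newnb_Nbr:
  assumes "valid_seq n E" "NB s = Nbr E j v"
  shows "newnb n s (ins_nbrs E (Suc j) v) (del_nbrs E (Suc j) v) = Nbr E (Suc j) v"
  using assms valid_edge[OF assms(1)]
  by (auto simp: newnb_def Nbr_def ins_nbrs_def del_nbrs_def)

lemma nochange_iff:
  "(ins_nbrs E (Suc j) v = {} \<and> del_nbrs E (Suc j) v = {}) \<longleftrightarrow> Nbr E (Suc j) v = Nbr E j v"
  by (auto simp: Nbr_def ins_nbrs_def del_nbrs_def)

lemma run_Suc_Alg:
  "run (Alg n) E (Suc j) v =
     mk n (newnb n (run (Alg n) E j v) (ins_nbrs E (Suc j) v) (del_nbrs E (Suc j) v))
          (newph (run (Alg n) E j v) (ins_nbrs E (Suc j) v) (del_nbrs E (Suc j) v))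
          (newcnt (bb n) (\<lambda>u. if {u, v} \<in> E (Suc j) then msg n (run (Alg n) E j u) (ins_nbrs E (Suc j) u) (del_nbrs E (Suc j) u) else None) (run (Alg n) E j v))
          (newbuf (bb n) (\<lambda>u. if {u, v} \<in> E (Suc j) then msg n (run (Alg n) E j u) (ins_nbrs E (Suc j) u) (del_nbrs E (Suc j) u) else None) (run (Alg n) E j v))"
  by (simp only: run.simps Alg_sel)

lemma finite_Nbr: "valid_seq n E \<Longrightarrow> Nbr E j v \<subseteq> {..<n}"
  using valid_edge by (fastforce simp: Nbr_def)

lemma I1: "valid_seq n E \<Longrightarrow> NB (run (Alg n) E j v) = Nbr E j v"
proof (induction j arbitrary: v)
  case 0
  then show ?case by (simp add: Alg_sel NB_mk Nbr_def valid_seq_def)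
next
  case (Suc j)
  have "finite (Nbr E (Suc j) v)" using finite_Nbr[OF Suc.prems] finite_subset by blast
  then show ?case using newnb_Nbr[OF Suc.prems Suc.IH[OF Suc.prems]]
    unfolding run_Suc_Alg by (simp add: NB_mk)
qed


lemma TT_pos: "0 < TT n" by (simp add: TT_def)

lemma msg_div: "(k * 2^b + chunk_enc b k S) div 2^b = k"
  using chunk_enc_less[of b k S] by simp
lemma msg_mod: "(k * 2^b + chunk_enc b k S) mod 2^b = chunk_enc b k S"
  using chunk_enc_less[of b k S] by simp

lemma I2: "valid_seq n E \<Longrightarrow> TT n \<le> PH (run (Alg n) E j u) \<or>
   (PH (run (Alg n) E j u) < j \<and> Nbr E (j - PH (run (Alg n) E j u)) u \<noteq> Nbr E (j - PH (run (Alg n) E j u) - 1) u)"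
proof (induction j arbitrary: u)
  case 0
  then show ?case by (simp add: Alg_sel PH_mk)
next
  case (Suc j)
  note IH = Suc.IH[OF Suc.prems, of u]
  show ?case
  proof (cases "ins_nbrs E (Suc j) u = {} \<and> del_nbrs E (Suc j) u = {}")
    case True
    then have "PH (run (Alg n) E (Suc j) u) = Suc (PH (run (Alg n) E j u))"
      unfolding run_Suc_Alg by (simp add: PH_mk newph_def)
    then show ?thesis using IH by auto
  next
    case False
    then have "PH (run (Alg n) E (Suc j) u) = 0"
      unfolding run_Suc_Alg by (auto simp add: PH_mk newph_def)
    moreover have "Nbr E (Suc j) u \<noteq> Nbr E j u" using False nochange_iff by blast
    ultimately show ?thesis by simp
  qed
qed

lemma I3:
  assumes "valid_seq n E"
  shows "{u, v} \<in> E j \<Longrightarrow> CNT (run (Alg n) E j v) u = min (Suc (PH (run (Alg n) E j u))) (TT n) \<and>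
     BUF (run (Alg n) E j v) u = Nbr E j u \<inter> {..< CNT (run (Alg n) E j v) u * bb n}"
proof (induction j arbitrary: u v)
  case 0
  then show ?case using assms by (simp add: valid_seq_def)
next
  case (Suc j)
  define b where "b = bb n"
  define T where "T = TT n"
  define rcv where "rcv = (\<lambda>u. if {u, v} \<in> E (Suc j) then msg n (run (Alg n) E j u) (ins_nbrs E (Suc j) u) (del_nbrs E (Suc j) u) else None)"
  define N where "N = Nbr E (Suc j) u"
  define p where "p = PH (run (Alg n) E j u)"
  have un: "u < n" using valid_edge[OF assms Suc.prems] by simp
  have rcvu: "rcv u = msg n (run (Alg n) E j u) (ins_nbrs E (Suc j) u) (del_nbrs E (Suc j) u)"
    using Suc.prems by (simp add: rcv_def)
  have nn: "newnb n (run (Alg n) E j u) (ins_nbrs E (Suc j) u) (del_nbrs E (Suc j) u) = N"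
    unfolding N_def using newnb_Nbr[OF assms I1[OF assms]] .
  have C: "CNT (run (Alg n) E (Suc j) v) u = newcnt b rcv (run (Alg n) E j v) u"
    unfolding run_Suc_Alg rcv_def b_def using un by (simp add: CNT_mk)
  have B: "BUF (run (Alg n) E (Suc j) v) u = newbuf b rcv (run (Alg n) E j v) u"
    unfolding run_Suc_Alg rcv_def b_def using un by (simp add: BUF_mk finite_newbuf)
  show ?case
  proof (cases "ins_nbrs E (Suc j) u = {} \<and> del_nbrs E (Suc j) u = {}")
    case False
    then have ph: "newph (run (Alg n) E j u) (ins_nbrs E (Suc j) u) (del_nbrs E (Suc j) u) = 0"
      by (auto simp: newph_def)
    then have P: "PH (run (Alg n) E (Suc j) u) = 0"
      unfolding run_Suc_Alg by (simp add: PH_mk)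
    have m: "rcv u = Some (0 * 2^b + chunk_enc b 0 N)"
      using rcvu ph nn TT_pos by (simp add: msg_def b_def)
    have c1: "CNT (run (Alg n) E (Suc j) v) u = 1"
      using C m msg_div[of 0 b N] by (simp add: newcnt_def)
    have "BUF (run (Alg n) E (Suc j) v) u = chunk_dec b 0 (chunk_enc b 0 N)"
      using B m msg_div[of 0 b N] msg_mod[of 0 b N] by (simp add: newbuf_def)
    also have "\<dots> = N \<inter> {..< 1 * b}" by (simp add: chunk_dec_enc lessThan_atLeast0)
    finally show ?thesis using c1 P TT_pos by (simp add: N_def b_def Suc_le_eq)
  next
    case True
    then have NN: "N = Nbr E j u" using nochange_iff N_def by blast
    have ej: "{u, v} \<in> E j" using Suc.prems NN unfolding N_def Nbr_def by auto
    note IH = Suc.IH[OF ej]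
    have ph: "newph (run (Alg n) E j u) (ins_nbrs E (Suc j) u) (del_nbrs E (Suc j) u) = Suc p"
      using True by (simp add: newph_def p_def)
    then have P: "PH (run (Alg n) E (Suc j) u) = Suc p"
      unfolding run_Suc_Alg by (simp add: PH_mk)
    show ?thesis
    proof (cases "Suc p < T")
      case True
      have m: "rcv u = Some (Suc p * 2^b + chunk_enc b (Suc p) N)"
        using rcvu ph nn True by (simp add: msg_def b_def T_def)
      have c1: "CNT (run (Alg n) E (Suc j) v) u = Suc (Suc p)"
        using C m msg_div[of "Suc p" b N] by (simp add: newcnt_def)
      have cold: "CNT (run (Alg n) E j v) u = Suc p" using IH True by (simp add: p_def T_def)
      have bo: "BUF (run (Alg n) E j v) u = N \<inter> {..< Suc p * b}"
      proof -
        have "BUF (run (Alg n) E j v) u = Nbr E j u \<inter> {..< CNT (run (Alg n) E j v) u * bb n}" using IH by blast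
        then show ?thesis unfolding cold NN b_def .
      qed
      have "BUF (run (Alg n) E (Suc j) v) u = BUF (run (Alg n) E j v) u \<union> chunk_dec b (Suc p) (chunk_enc b (Suc p) N)"
        using B m msg_div[of "Suc p" b N] msg_mod[of "Suc p" b N] by (simp add: newbuf_def)
      also have "\<dots> = N \<inter> {..< Suc p * b} \<union> N \<inter> {Suc p * b..<Suc (Suc p) * b}"
        using bo by (simp only: chunk_dec_enc)
      also have "\<dots> = N \<inter> {..< Suc (Suc p) * b}" by auto
      finally show ?thesis using c1 P True by (simp add: N_def b_def T_def)
    next
      case False
      have m: "rcv u = None"
        using rcvu ph False by (simp add: msg_def T_def)
      have "CNT (run (Alg n) E (Suc j) v) u = CNT (run (Alg n) E j v) u"
        using C m by (simp add: newcnt_def)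
      moreover have "BUF (run (Alg n) E (Suc j) v) u = BUF (run (Alg n) E j v) u"
        using B m by (simp add: newbuf_def)
      ultimately show ?thesis using IH P False NN by (simp add: N_def T_def p_def)
    qed
  qed
qed


lemma bb_pos: "2 \<le> n \<Longrightarrow> 0 < bb n"
  unfolding bb_def by (drule floor_log_rec) simp

lemma TT_bb: "2 \<le> n \<Longrightarrow> n < TT n * bb n"
proof -
  assume "2 \<le> n"
  then have b: "0 < bb n" by (rule bb_pos)
  have "n = n div bb n * bb n + n mod bb n" by simp
  moreover have "n mod bb n < bb n" using b by simp
  ultimately have "n < n div bb n * bb n + bb n" by linarith
  then show ?thesis unfolding TT_def by (simp add: algebra_simps)
qed

lemma correct_step:
  assumes V: "valid_seq n E" and n2: "2 \<le> n"
    and c: "consistent (Alg n) v (run (Alg n) E j v)"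
  shows "answer (Alg n) v (run (Alg n) E j v) x y \<longleftrightarrow> {x, y} \<in> two_hop E j v"
proof -
  have nb: "NB (run (Alg n) E j v) = Nbr E j v" using I1[OF V] .
  have bufeq: "BUF (run (Alg n) E j v) w = Nbr E j w" if w: "w \<in> Nbr E j v" for w
  proof -
    have e: "{w, v} \<in> E j" using w by (simp add: Nbr_def insert_commute)
    note i3 = I3[OF V e]
    have "TT n \<le> CNT (run (Alg n) E j v) w" using c w nb by (simp add: Alg_sel)
    then have "n < CNT (run (Alg n) E j v) w * bb n" using TT_bb[OF n2]
      by (meson less_le_trans mult_le_mono1)
    moreover have "Nbr E j w \<subseteq> {..<n}" using finite_Nbr[OF V] .
    ultimately show ?thesis using i3 by auto
  qed
  have th: "{x, y} \<in> two_hop E j v \<longleftrightarrow> {x, y} \<in> E j \<and> (x = v \<or> {v, x} \<in> E j \<or> y = v \<or> {v, y} \<in> E j)"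
    unfolding two_hop_def by blast
  have sw: "{y, x} = {x, y}" by (rule insert_commute)
  have a1: "(x \<in> Nbr E j v \<and> y \<in> BUF (run (Alg n) E j v) x) \<longleftrightarrow> ({v, x} \<in> E j \<and> {x, y} \<in> E j)"
    using bufeq[of x] by (auto simp: Nbr_def)
  have a2: "(y \<in> Nbr E j v \<and> x \<in> BUF (run (Alg n) E j v) y) \<longleftrightarrow> ({v, y} \<in> E j \<and> {x, y} \<in> E j)"
    using bufeq[of y] sw by (auto simp: Nbr_def)
  have "answer (Alg n) v (run (Alg n) E j v) x y \<longleftrightarrow>
     (x = v \<and> {v, y} \<in> E j) \<or> (y = v \<and> {v, x} \<in> E j) \<or> ({v, x} \<in> E j \<and> {x, y} \<in> E j) \<or> ({v, y} \<in> E j \<and> {x, y} \<in> E j)"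
    unfolding Alg_sel(5) nb a1 a2 by (simp add: Nbr_def)
  also have "\<dots> \<longleftrightarrow> {x, y} \<in> two_hop E j v"
    unfolding th using sw by auto
  finally show ?thesis .
qed


lemma run_AlgN_cons: "consistent (AlgN n) v (run (AlgN n) E j v) = consistent (Alg n) v (run (Alg n) E j v)"
  by (simp add: run_AlgN AlgN_sel)
lemma run_AlgN_ans: "answer (AlgN n) v (run (AlgN n) E j v) x y = answer (Alg n) v (run (Alg n) E j v) x y"
  by (simp add: run_AlgN AlgN_sel)

lemma finite_E: "valid_seq n E \<Longrightarrow> finite (E j)"
proof -
  assume V: "valid_seq n E"
  have "E j \<subseteq> (\<lambda>(u, w). {u, w}) ` ({..<n} \<times> {..<n})"
  proof
    fix e assume "e \<in> E j"
    then obtain u w where "e = {u, w}" "u < n" "w < n" using V unfolding valid_seq_def by blast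
    then show "e \<in> (\<lambda>(u, w). {u, w}) ` ({..<n} \<times> {..<n})" by auto
  qed
  then show ?thesis by (rule finite_subset) simp
qed

lemma changes_pos: "valid_seq n E \<Longrightarrow> E s \<noteq> E (s - 1) \<Longrightarrow> 1 \<le> changes E s"
proof -
  assume V: "valid_seq n E" and ne: "E s \<noteq> E (s - 1)"
  have f: "finite ((E (s - 1) - E s) \<union> (E s - E (s - 1)))" using finite_E[OF V] by blast
  have "(E (s - 1) - E s) \<union> (E s - E (s - 1)) \<noteq> {}" using ne by blast
  then show ?thesis unfolding changes_def using f by (simp add: Suc_le_eq card_gt_0_iff)
qed

lemma inc_bound:
  assumes V: "valid_seq n E"
  shows "inconsistent_rounds n (AlgN n) E i \<le> TT n * total_changes E i"
proof -
  define T where "T = TT n"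
  define S where "S = {s \<in> {1..i}. E s \<noteq> E (s - 1)}"
  define Inc where "Inc = {j \<in> {1..i}. \<exists>v < n. \<not> consistent (AlgN n) v (run (AlgN n) E j v)}"
  have sub: "Inc \<subseteq> (\<Union>s\<in>S. {s..<s + T})"
  proof
    fix j assume "j \<in> Inc"
    then obtain v where j: "1 \<le> j" "j \<le> i" and "v < n" and nc: "\<not> consistent (Alg n) v (run (Alg n) E j v)"
      unfolding Inc_def run_AlgN_cons by auto
    then obtain w where w: "w \<in> Nbr E j v" and lt: "CNT (run (Alg n) E j v) w < T"
      using I1[OF V] by (auto simp: Alg_sel T_def not_le)
    have e: "{w, v} \<in> E j" using w by (simp add: Nbr_def insert_commute)
    define p where "p = PH (run (Alg n) E j w)"
    have "Suc p < T" using I3[OF V e] lt by (simp add: p_def T_def)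
    then have "p < j \<and> Nbr E (j - p) w \<noteq> Nbr E (j - p - 1) w" using I2[OF V, of j w] by (simp add: p_def T_def)
    then have pj: "p < j" and "E (j - p) \<noteq> E (j - p - 1)" unfolding Nbr_def by auto
    then have "j - p \<in> S" using j by (auto simp: S_def)
    moreover have "j \<in> {j - p..<j - p + T}" using pj \<open>Suc p < T\<close> by auto
    ultimately show "j \<in> (\<Union>s\<in>S. {s..<s + T})" by blast
  qed
  have fS: "finite S" by (simp add: S_def)
  have "card Inc \<le> card (\<Union>s\<in>S. {s..<s + T})"
    by (rule card_mono) (use fS sub in auto)
  also have "\<dots> \<le> (\<Sum>s\<in>S. card {s..<s + T})" using fS by (rule card_UN_le)
  also have "\<dots> = card S * T" by simp
  also have "card S \<le> total_changes E i"
  proof -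
    have "card S = (\<Sum>s\<in>S. 1)" by simp
    also have "\<dots> \<le> (\<Sum>s\<in>S. changes E s)"
      by (rule sum_mono) (metis (mono_tags, lifting) S_def changes_pos[OF V] mem_Collect_eq)
    also have "\<dots> \<le> (\<Sum>s\<in>{1..i}. changes E s)"
      by (rule sum_mono2) (auto simp: S_def)
    finally show ?thesis unfolding total_changes_def .
  qed
  then have "card S * T \<le> total_changes E i * T" by simp
  finally show ?thesis unfolding inconsistent_rounds_def Inc_def[symmetric] T_def by (simp add: mult.commute)
qed


lemma msg_bound:
  assumes n2: "2 \<le> n"
  shows "msg_bounded n 2 (AlgN n)"
  unfolding msg_bounded_def
proof (intro allI impI)
  fix v s ins del u m
  assume "send (AlgN n) v s ins del u = Some m"
  then have "msg n (from_nat s) ins del = Some m" by (simp add: AlgN_sel Alg_sel)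
  then obtain k S where k: "k < TT n" and m: "m = k * 2 ^ bb n + chunk_enc (bb n) k S"
    unfolding msg_def by (auto split: if_splits)
  have d: "chunk_enc (bb n) k S < 2 ^ bb n" by (rule chunk_enc_less)
  have p2: "2 ^ bb n \<le> n" unfolding bb_def using n2 by (intro floor_log_exp2_le) simp
  have T: "TT n \<le> n + 1" unfolding TT_def by (simp add: div_le_dividend)
  have "m < Suc k * 2 ^ bb n" using m d by simp
  also have "\<dots> \<le> TT n * 2 ^ bb n" using k by (intro mult_le_mono1) simp
  also have "\<dots> \<le> (n + 1) * (n + 1)" using T p2 by (intro mult_le_mono) auto
  finally show "m < (n + 1) ^ 2" by (simp add: power2_eq_square)
qed

lemma TT_real:
  assumes n2: "2 \<le> n"
  shows "real (TT n) \<le> 3 * real n / log 2 (real n)"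
proof -
  define b where "b = bb n"
  define L where "L = log 2 (real n)"
  have b1: "1 \<le> b" using bb_pos[OF n2] by (simp add: b_def)
  have p2: "2 ^ b \<le> n" unfolding b_def bb_def using n2 by (intro floor_log_exp2_le) simp
  have gt: "n < 2 ^ (b + 1)" using floor_log_exp2_gt[of n] by (simp add: b_def bb_def)
  have L1: "1 \<le> L" unfolding L_def using n2 by simp
  have "L < real (b + 1)"
  proof -
    have "real n < 2 powr real (b + 1)" using gt
      by (metis of_nat_less_iff of_nat_numeral powr_realpow zero_less_numeral of_nat_power)
    then show ?thesis unfolding L_def using n2 by (subst log_less_iff) auto
  qed
  then have Lb: "L \<le> 2 * real b" using b1 by simp
  have "b < 2 ^ b" by (rule less_exp)
  then have "b + 1 \<le> n" using p2 by linarith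
  then have Ln: "L \<le> real n" using \<open>L < real (b + 1)\<close> by linarith
  have "real (TT n) = real (n div b) + 1" by (simp add: TT_def b_def)
  also have "\<dots> \<le> real n / real b + 1" using of_nat_div_le_of_nat[of n b] by simp
  also have "real n / real b = 2 * real n / (2 * real b)" by simp
  also have "\<dots> \<le> 2 * real n / L" using Lb L1 by (intro divide_left_mono) auto
  also have "(1::real) \<le> real n / L" using Ln L1 by simp
  finally have "real (TT n) \<le> 2 * real n / L + real n / L" by simp
  also have "\<dots> = 3 * real n / L" by (simp add: add_divide_distrib[symmetric])
  finally show ?thesis unfolding L_def .
qed

theorem lemma10:
  shows "\<exists>(K::nat) (C::real). \<forall>n::nat. n \<ge> 2 \<longrightarrow>
           (\<exists>A :: nat dds. msg_bounded n K A \<and> correct_2hop n A \<and>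
              amortized_le n A (C * real n / log 2 (real n)))"
proof (intro exI allI impI)
  fix n :: nat assume n2: "2 \<le> n"
  show "msg_bounded n 2 (AlgN n) \<and> correct_2hop n (AlgN n) \<and>
              amortized_le n (AlgN n) (3 * real n / log 2 (real n))"
  proof (intro conjI)
    show "msg_bounded n 2 (AlgN n)" by (rule msg_bound[OF n2])
    show "correct_2hop n (AlgN n)"
      unfolding correct_2hop_def run_AlgN_cons run_AlgN_ans
      using correct_step[OF _ n2] by blast
    show "amortized_le n (AlgN n) (3 * real n / log 2 (real n))"
      unfolding amortized_le_def
    proof (intro allI impI)
      fix E i assume V: "valid_seq n E"
      have "real (inconsistent_rounds n (AlgN n) E i) \<le> real (TT n) * real (total_changes E i)"
        using inc_bound[OF V, of i] by (metis of_nat_le_iff of_nat_mult)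
      also have "\<dots> \<le> 3 * real n / log 2 (real n) * real (total_changes E i)"
        using TT_real[OF n2] by (intro mult_right_mono) auto
      finally show "real (inconsistent_rounds n (AlgN n) E i) \<le> 3 * real n / log 2 (real n) * real (total_changes E i)" .
    qed
  qed
qed

end
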